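(* Let $P\subset\mathbb{R}^n$ be a Delzant polytope in standard position at the vertex $O=0$, and let $u$ be a normalized symplectic potential on $P$ with $|Rm|\le1$ and $\int_{\partial P}u\,d\sigma<C_1$. Let $Q$ be the facet of $P$ contained in the hyperplane $\{x_n=0\}$ (the $x_1\cdots x_{n-1}$ plane). For $\epsilon>0$ let $Q_\epsilon$ be the set of points of $Q$ at distance at least $\epsilon$ from $\partial Q$. Then there exists a constant $C$ depending only on $\epsilon$, $C_1$ and $P$ such that for every $x\in Q_\epsilon$, $$u(x)<C,\quad\left|\frac{\partial u}{\partial x_1}\right|(x)<C,\ \dots,\ \left|\frac{\partial u}{\partial x_{n-1}}\right|(x)<C.$$
   Context: Standard position: $O=0$ is a vertex of $P$, the $n$ facets through $O$ are the coordinate hyperplanes, $P$ lies in the closed first orthant, and the segments $\{te_i:0\le t\le1\}$ lie on the edges of $P$ through $O$. $P$ has facets $P_j$ with primitive inward normals $\vec n_j$. A symplectic potential is a function on $\bar P$, smooth and strictly convex in the interior, with smooth strictly convex restriction to each face of $\partial P$, satisfying Guillemin's boundary conditions. $(u^{ij})$ is the inverse Hessian, $u^{ij}_{~kl}=\partial_k\partial_lu^{ij}$, $|Rm|^2=\sum u^{ij}_{~kl}u^{kl}_{~ij}$. A fixed interior point $x_0$ is chosen and $u$ is normalized if $u(x_0)=0$, $Du(x_0)=0$. $d\sigma$ is, on each facet $P_j$, Lebesgue measure divided by $|\vec n_j|$. *)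

theory Defs
  imports "HOL-Analysis.Analysis"
begin

definition partial :: "'n::finite \<Rightarrow> (real^'n \<Rightarrow> real) \<Rightarrow> real^'n \<Rightarrow> real" where
  "partial i g x = deriv (\<lambda>t. g (x + t *\<^sub>R axis i 1)) 0"

definition iter_partial :: "'n::finite list \<Rightarrow> (real^'n \<Rightarrow> real) \<Rightarrow> real^'n \<Rightarrow> real" where
  "iter_partial is g = foldr partial is g"

definition C_inf_on :: "(real^'n::finite) set \<Rightarrow> (real^'n \<Rightarrow> real) \<Rightarrow> bool" where
  "C_inf_on U g \<longleftrightarrow> open U \<and>
     (\<forall>is. continuous_on U (iter_partial is g) \<and>
        (\<forall>i. \<forall>x\<in>U. (\<lambda>t. iter_partial is g (x + t *\<^sub>R axis i 1)) differentiable (at 0)))"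

definition smooth_on :: "(real^'n::finite) set \<Rightarrow> (real^'n \<Rightarrow> real) \<Rightarrow> bool" where
  "smooth_on S f \<longleftrightarrow> (\<exists>U g. S \<subseteq> U \<and> C_inf_on U g \<and> (\<forall>x\<in>S. g x = f x))"

definition strictly_convex_on :: "(real^'n::finite) set \<Rightarrow> (real^'n \<Rightarrow> real) \<Rightarrow> bool" where
  "strictly_convex_on S f \<longleftrightarrow> convex S \<and>
     (\<forall>x\<in>S. \<forall>y\<in>S. x \<noteq> y \<longrightarrow> (\<forall>t. 0 < t \<and> t < 1 \<longrightarrow>
        f ((1 - t) *\<^sub>R x + t *\<^sub>R y) < (1 - t) * f x + t * f y))"

definition hess :: "(real^'n::finite \<Rightarrow> real) \<Rightarrow> real^'n \<Rightarrow> real^'n^'n" where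
  "hess u x = (\<chi> i j. partial i (partial j u) x)"

definition inv_hess :: "(real^'n::finite \<Rightarrow> real) \<Rightarrow> 'n \<Rightarrow> 'n \<Rightarrow> real^'n \<Rightarrow> real" where
  "inv_hess u i j x = matrix_inv (hess u x) $ i $ j"

definition Rm_sq :: "(real^'n::finite \<Rightarrow> real) \<Rightarrow> real^'n \<Rightarrow> real" where
  "Rm_sq u x = (\<Sum>i\<in>UNIV. \<Sum>j\<in>UNIV. \<Sum>k\<in>UNIV. \<Sum>l\<in>UNIV.
      partial k (partial l (inv_hess u i j)) x * partial i (partial j (inv_hess u k l)) x)"

definition integral_vec :: "real^'n::finite \<Rightarrow> bool" where
  "integral_vec v \<longleftrightarrow> (\<forall>i. v $ i \<in> \<int>)"

definition primitive_vec :: "real^'n::finite \<Rightarrow> bool" where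
  "primitive_vec v \<longleftrightarrow> integral_vec v \<and> v \<noteq> 0 \<and>
     (\<forall>m::int. m > 1 \<longrightarrow> \<not> integral_vec ((1 / of_int m) *\<^sub>R v))"

definition prim_inward_normal :: "(real^'n::finite) set \<Rightarrow> (real^'n) set \<Rightarrow> real^'n \<Rightarrow> bool" where
  "prim_inward_normal P F nu \<longleftrightarrow> primitive_vec nu \<and>
     (\<exists>c. (\<forall>x\<in>F. nu \<bullet> x = c) \<and> (\<forall>x\<in>P. c \<le> nu \<bullet> x))"

definition facet_normal :: "(real^'n::finite) set \<Rightarrow> (real^'n) set \<Rightarrow> real^'n" where
  "facet_normal P F = (THE nu. prim_inward_normal P F nu)"

definition facet_fun :: "(real^'n::finite) set \<Rightarrow> (real^'n) set \<Rightarrow> real^'n \<Rightarrow> real" where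
  "facet_fun P F x = facet_normal P F \<bullet> x - facet_normal P F \<bullet> (SOME a. a \<in> F)"

definition delzant :: "(real^'n::finite) set \<Rightarrow> bool" where
  "delzant P \<longleftrightarrow> polytope P \<and> interior P \<noteq> {} \<and>
     (\<forall>F. F facet_of P \<longrightarrow> (\<exists>nu. prim_inward_normal P F nu)) \<and>
     (\<forall>v. v extreme_point_of P \<longrightarrow>
        (let Fs = {F. F facet_of P \<and> v \<in> F} in
           card Fs = CARD('n) \<and> inj_on (facet_normal P) Fs \<and>
           independent (facet_normal P ` Fs) \<and>
           (\<forall>z. integral_vec z \<longrightarrow>
              (\<exists>c :: (real^'n) set \<Rightarrow> int. z = (\<Sum>F\<in>Fs. of_int (c F) *\<^sub>R facet_normal P F)))))"

definition standard_position :: "(real^'n::finite) set \<Rightarrow> bool" where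
  "standard_position P \<longleftrightarrow> 0 extreme_point_of P \<and>
     P \<subseteq> {x. \<forall>i. 0 \<le> x $ i} \<and>
     {F. F facet_of P \<and> 0 \<in> F} = range (\<lambda>i. P \<inter> {x. x $ i = 0}) \<and>
     (\<forall>i. \<exists>E. E face_of P \<and> aff_dim E = 1 \<and> closed_segment 0 (axis i 1) \<subseteq> E)"

definition symplectic_potential :: "(real^'n::finite) set \<Rightarrow> (real^'n \<Rightarrow> real) \<Rightarrow> bool" where
  "symplectic_potential P u \<longleftrightarrow>
     C_inf_on (interior P) u \<and> strictly_convex_on (interior P) u \<and>
     (\<forall>F. F face_of P \<and> F \<noteq> {} \<and> F \<subseteq> frontier P \<longrightarrow>
        smooth_on (rel_interior F) u \<and> strictly_convex_on (rel_interior F) u) \<and>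
     \<comment> \<open>Guillemin boundary conditions\<close>
     (\<exists>f. smooth_on P f \<and>
        (\<forall>x\<in>P. u x = (1/2) * (\<Sum>F\<in>{F. F facet_of P}. facet_fun P F x * ln (facet_fun P F x)) + f x)) \<and>
     (\<exists>\<delta>. smooth_on P \<delta> \<and> (\<forall>x\<in>P. 0 < \<delta> x) \<and>
        (\<forall>x\<in>interior P. det (hess u x) = inverse (\<delta> x * (\<Prod>F\<in>{F. F facet_of P}. facet_fun P F x))))"

definition normalized_at :: "real^'n::finite \<Rightarrow> (real^'n \<Rightarrow> real) \<Rightarrow> bool" where
  "normalized_at x0 u \<longleftrightarrow> u x0 = 0 \<and> (\<forall>i. partial i u x0 = 0)"

text \<open>(n-1)-dimensional Lebesgue integral over a facet F with unit normal e, computed as the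
  n-dimensional integral over the unit-thickness slab F + [0,1] e of f composed with the
  orthogonal projection back onto the hyperplane of F.\<close>
definition facet_lebesgue_integral :: "(real^'n::finite) set \<Rightarrow> real^'n \<Rightarrow> (real^'n \<Rightarrow> real) \<Rightarrow> real" where
  "facet_lebesgue_integral F nu f =
     (let e = (1 / norm nu) *\<^sub>R nu; a0 = (SOME a. a \<in> F) in
      integral {a + t *\<^sub>R e | a t. a \<in> F \<and> 0 \<le> t \<and> t \<le> 1}
        (\<lambda>x. f (x - ((x - a0) \<bullet> e) *\<^sub>R e)))"

text \<open>Integral over the boundary of P w.r.t. d sigma = Lebesgue / |n_j| on each facet P_j.\<close>
definition boundary_integral :: "(real^'n::finite) set \<Rightarrow> (real^'n \<Rightarrow> real) \<Rightarrow> real" where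
  "boundary_integral P f = (\<Sum>F\<in>{F. F facet_of P}.
      facet_lebesgue_integral F (facet_normal P F) f / norm (facet_normal P F))"

definition inner_part :: "(real^'n::finite) set \<Rightarrow> real \<Rightarrow> (real^'n) set" where
  "inner_part Q eps = {x\<in>Q. \<forall>y\<in>rel_frontier Q. eps \<le> dist x y}"

end

theory Submission
  imports Defs "HOL-Real_Asymp.Real_Asymp"
begin


lemma primitive_prop_eq:
  fixes a b :: "real^'n::finite"
  assumes pa: "primitive_vec a" and pb: "primitive_vec b" and ab: "a = l *\<^sub>R b" and l: "l > 0"
  shows "l = 1"
proof -
  have ia: "\<forall>i. a $ i \<in> \<int>" and ib: "\<forall>i. b $ i \<in> \<int>"
    using pa pb by (auto simp: primitive_vec_def integral_vec_def)
  have "b \<noteq> 0" using pb by (simp add: primitive_vec_def)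
  then obtain j where bj: "b $ j \<noteq> 0" by (auto simp: vec_eq_iff)
  have lj: "l = a $ j / b $ j" using ab bj by simp
  have "l \<in> \<rat>" using lj ia ib by (metis Ints_subset_Rats Rats_divide subsetD)
  then obtain p q :: int where q: "q > 0" and cop: "coprime p q" and lpq: "l = of_int p / of_int q"
    by (rule Rats_cases')
  have p: "p > 0" using l q lpq by (simp add: zero_less_divide_iff)
  define A where "A i = (SOME z. a $ i = of_int z)" for i
  define B where "B i = (SOME z. b $ i = of_int z)" for i
  have A: "a $ i = of_int (A i)" for i unfolding A_def by (rule someI_ex) (use ia in \<open>blast elim: Ints_cases\<close>)
  have B: "b $ i = of_int (B i)" for i unfolding B_def by (rule someI_ex) (use ib in \<open>blast elim: Ints_cases\<close>)
  have eq: "q * A i = p * B i" for i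
  proof -
    have "a $ i = l * b $ i" using ab by simp
    then have "real_of_int q * a $ i = of_int p * b $ i" using lpq q by (simp add: field_simps)
    then show ?thesis unfolding A B by (metis of_int_eq_iff of_int_mult)
  qed
  have q1: "q = 1"
  proof (rule ccontr)
    assume "q \<noteq> 1" with q have q1: "q > 1" by simp
    have "q dvd B i" for i
    proof -
      have "q dvd p * B i" using eq[of i] by (metis dvd_triv_left)
      then show ?thesis using cop by (metis coprime_commute coprime_dvd_mult_right_iff)
    qed
    then have "integral_vec ((1 / of_int q) *\<^sub>R b)"
      unfolding integral_vec_def using q by (auto simp: B intro!: of_int_divide_in_Ints)
    with pb q1 show False unfolding primitive_vec_def by blast
  qed
  have p1: "p = 1"
  proof (rule ccontr)
    assume "p \<noteq> 1" with p have p1: "p > 1" by simp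
    have "(1 / of_int p) *\<^sub>R a = b" using ab lpq q1 p by (simp add: vec_eq_iff)
    then have "integral_vec ((1 / of_int p) *\<^sub>R a)" using pb by (simp add: primitive_vec_def)
    with pa p1 show False unfolding primitive_vec_def by blast
  qed
  show ?thesis using lpq p1 q1 by simp
qed

lemma normal_interior_pos:
  fixes nu p :: "real^'n::finite"
  assumes nu: "nu \<noteq> 0" and c: "\<forall>x\<in>P. c \<le> nu \<bullet> x" and p: "p \<in> interior P"
  shows "c < nu \<bullet> p"
proof -
  obtain e where e: "e > 0" "ball p e \<subseteq> P" using p by (meson mem_interior)
  define q where "q = p - (e / (2 * norm nu)) *\<^sub>R nu"
  have nn: "norm nu > 0" using nu by simp
  have "dist p q = e / 2" using nn e by (simp add: q_def dist_norm)
  then have "q \<in> P" using e by auto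
  then have "c \<le> nu \<bullet> q" using c by blast
  also have "nu \<bullet> q = nu \<bullet> p - e / 2 * norm nu"
    using nn by (simp add: q_def inner_diff_right power2_norm_eq_inner[symmetric] power2_eq_square)
  also have "\<dots> < nu \<bullet> p" using e nn by simp
  finally show ?thesis .
qed

lemma normal_parallel:
  fixes nu w :: "real^'n::finite"
  assumes sp: "span ((\<lambda>x. x - a) ` F) = {x. w \<bullet> x = 0}" and w: "w \<noteq> 0"
    and on: "\<forall>x\<in>F. nu \<bullet> x = c" and a: "a \<in> F"
  shows "\<exists>l. nu = l *\<^sub>R w"
proof -
  have "(\<lambda>x. x - a) ` F \<subseteq> {x. nu \<bullet> x = 0}" using on a by (auto simp: inner_diff_right)
  then have sub: "{x. w \<bullet> x = 0} \<subseteq> {x. nu \<bullet> x = 0}"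
    using sp span_minimal[OF _ subspace_hyperplane] by metis
  define w' where "w' = nu - ((nu \<bullet> w) / (w \<bullet> w)) *\<^sub>R w"
  have ww: "w \<bullet> w \<noteq> 0" using w by simp
  have "w \<bullet> w' = 0" using ww by (simp add: w'_def inner_diff_right inner_commute)
  then have "nu \<bullet> w' = 0" using sub by blast
  then have "w' \<bullet> w' = 0" using \<open>w \<bullet> w' = 0\<close>
    by (simp add: w'_def inner_diff_left)
  then have "w' = 0" by simp
  then show ?thesis unfolding w'_def by (metis eq_iff_diff_eq_0)
qed

lemma normal_unique:
  fixes P F :: "(real^'n::finite) set"
  assumes int: "interior P \<noteq> {}" and F: "F facet_of P"
    and n1: "prim_inward_normal P F n1" and n2: "prim_inward_normal P F n2"
  shows "n1 = n2"
proof -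
  obtain c1 where c1: "\<forall>x\<in>F. n1 \<bullet> x = c1" "\<forall>x\<in>P. c1 \<le> n1 \<bullet> x" and p1: "primitive_vec n1"
    using n1 unfolding prim_inward_normal_def by blast
  obtain c2 where c2: "\<forall>x\<in>F. n2 \<bullet> x = c2" "\<forall>x\<in>P. c2 \<le> n2 \<bullet> x" and p2: "primitive_vec n2"
    using n2 unfolding prim_inward_normal_def by blast
  have n10: "n1 \<noteq> 0" and n20: "n2 \<noteq> 0" using p1 p2 by (auto simp: primitive_vec_def)
  obtain a where a: "a \<in> F" using F by (auto simp: facet_of_def)
  have "aff_dim F = aff_dim P - 1" using F by (simp add: facet_of_def)
  also have "aff_dim P = int DIM(real^'n)" using aff_dim_nonempty_interior[OF int] .
  finally have "int (dim ((\<lambda>x. x - a) ` F)) = int DIM(real^'n) - 1"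
    using aff_dim_eq_dim_subtract[of a F] a hull_inc by metis
  then have "dim ((\<lambda>x. x - a) ` F) = DIM(real^'n) - 1" by linarith
  then obtain w where w: "w \<noteq> 0" "span ((\<lambda>x. x - a) ` F) = {x. w \<bullet> x = 0}"
    by (rule lowdim_eq_hyperplane)
  obtain l1 where l1: "n1 = l1 *\<^sub>R w" using normal_parallel[OF w(2) w(1) c1(1) a] by blast
  obtain l2 where l2: "n2 = l2 *\<^sub>R w" using normal_parallel[OF w(2) w(1) c2(1) a] by blast
  have l20: "l2 \<noteq> 0" using n20 l2 by auto
  have eq: "n1 = (l1 / l2) *\<^sub>R n2" using l1 l2 l20 by simp
  obtain p where p: "p \<in> interior P" using int by blast
  have pos1: "c1 < n1 \<bullet> p" by (rule normal_interior_pos[OF n10 c1(2) p])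
  have pos2: "c2 < n2 \<bullet> p" by (rule normal_interior_pos[OF n20 c2(2) p])
  have "n1 \<bullet> p - c1 = n1 \<bullet> (p - a)" using c1 a by (simp add: inner_diff_right)
  also have "\<dots> = (l1 / l2) * (n2 \<bullet> (p - a))" by (simp add: eq)
  also have "n2 \<bullet> (p - a) = n2 \<bullet> p - c2" using c2 a by (simp add: inner_diff_right)
  finally have "n1 \<bullet> p - c1 = (l1 / l2) * (n2 \<bullet> p - c2)" .
  then have "l1 / l2 > 0" using pos1 pos2 by (metis diff_gt_0_iff_gt zero_less_mult_pos2)
  then have "l1 / l2 = 1" using primitive_prop_eq[OF p1 p2 eq] by blast
  then show ?thesis using eq by simp
qed

lemma facet_normal_prop:
  fixes P F :: "(real^'n::finite) set"
  assumes int: "interior P \<noteq> {}" and F: "F facet_of P" and ex: "\<exists>nu. prim_inward_normal P F nu"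
  shows "prim_inward_normal P F (facet_normal P F)"
  unfolding facet_normal_def
  by (rule theI') (use ex normal_unique[OF int F] in blast)



lemma convex_min_partials:
  fixes u :: "real^'n::finite \<Rightarrow> real"
  assumes S: "open S" and cvx: "convex_on S u" and x0: "x0 \<in> S"
    and d: "\<And>i. ((\<lambda>t. u (x0 + t *\<^sub>R axis i 1)) has_real_derivative 0) (at 0)"
    and y: "y \<in> S"
  shows "u x0 \<le> u y"
proof (rule ccontr)
  assume "\<not> u x0 \<le> u y"
  define \<delta> where "\<delta> = u x0 - u y"
  have dpos: "\<delta> > 0" using \<open>\<not> u x0 \<le> u y\<close> by (simp add: \<delta>_def)
  define v where "v = y - x0"
  define N where "N = real CARD('n)"
  have Npos: "N > 0" by (simp add: N_def)
  define q where "q i s = (u (x0 + (s * (- N * v $ i)) *\<^sub>R axis i 1) - u x0) / s" for i s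
  have lim: "((\<lambda>s. \<Sum>i\<in>UNIV. q i s) \<longlongrightarrow> 0) (at_right 0)"
  proof -
    have "((\<lambda>s. q i s) \<longlongrightarrow> 0) (at_right 0)" for i
    proof -
      have "((\<lambda>s. u (x0 + (s * (- N * v $ i)) *\<^sub>R axis i 1)) has_real_derivative 0 * (- N * v $ i)) (at 0 within {0<..})"
        by (rule DERIV_chain2[where f="\<lambda>t. u (x0 + t *\<^sub>R axis i 1)", OF _ ])
           (use d[of i] in \<open>auto intro!: derivative_eq_intros\<close>)
      then have "((\<lambda>s. (u (x0 + (s * (- N * v $ i)) *\<^sub>R axis i 1) - u (x0 + (0 * (- N * v $ i)) *\<^sub>R axis i 1)) / (s - 0)) \<longlongrightarrow> 0) (at_right 0)"
        by (simp add: has_field_derivative_iff)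
      then show ?thesis by (simp add: q_def)
    qed
    then show ?thesis using tendsto_sum[of UNIV "\<lambda>i s. q i s" "\<lambda>i. 0"] by simp
  qed
  obtain r where r: "r > 0" "ball x0 r \<subseteq> S" using S x0 openE by blast
  define s0 where "s0 = min 1 (r / (N * norm v + 1))"
  have den: "N * norm v + 1 > 0" using Npos by (smt (verit) mult_nonneg_nonneg norm_ge_zero)
  have s0: "s0 > 0" using r den by (simp add: s0_def)
  have ev: "\<forall>\<^sub>F s in at_right 0. N * \<delta> \<le> (\<Sum>i\<in>UNIV. q i s)"
  proof -
    have "\<forall>\<^sub>F s in at_right 0. s < s0" using s0 by (auto simp: eventually_at_right_field intro!: exI[of _ s0])
    moreover have "\<forall>\<^sub>F s in at_right (0::real). s > 0" by (simp add: eventually_at_right_less)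
    ultimately show ?thesis
    proof eventually_elim
      case (elim s)
      have s1: "s < 1" using elim s0_def by simp
      have sr: "s * (N * norm v + 1) < r"
      proof -
        have "s < r / (N * norm v + 1)" using elim s0_def by simp
        then show ?thesis using den by (simp add: pos_less_divide_eq)
      qed
      have N1: "N \<ge> 1" unfolding N_def using zero_less_card_finite[where 'a='n] by linarith
      have "s * norm v \<le> s * (N * norm v)"
        using N1 elim by (intro mult_left_mono) (auto intro: mult_right_mono[of 1 N "norm v", simplified])
      also have "\<dots> < s * (N * norm v + 1)" using elim by simp
      finally have sv: "s * norm v < r" using sr by linarith
      have inS: "x0 + w \<in> S" if "norm w < r" for w using r that by (auto simp: dist_norm)
      have y_i: "x0 + (s * (- N * v $ i)) *\<^sub>R axis i 1 \<in> S" for i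
      proof -
        have "norm ((s * (- N * v $ i)) *\<^sub>R axis i (1::real)) = s * N * \<bar>v $ i\<bar>"
          using elim Npos by (simp add: abs_mult)
        also have "\<dots> \<le> s * N * norm v" using elim Npos by (simp add: component_le_norm_cart)
        also have "\<dots> < s * (N * norm v + 1)" using elim by (simp add: algebra_simps)
        also have "\<dots> < r" by (rule sr)
        finally show ?thesis by (rule inS)
      qed
      have pm: "x0 + s *\<^sub>R v \<in> S" "x0 - s *\<^sub>R v \<in> S"
        using inS[of "s *\<^sub>R v"] inS[of "- (s *\<^sub>R v)"] sv elim by auto
      have c1: "u (x0 + s *\<^sub>R v) \<le> u x0 - s * \<delta>"
      proof -
        have "x0 + s *\<^sub>R v = (1 - s) *\<^sub>R x0 + s *\<^sub>R y" by (simp add: v_def algebra_simps)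
        then have "u (x0 + s *\<^sub>R v) \<le> (1 - s) * u x0 + s * u y"
          using convex_onD[OF cvx, of s x0 y] elim s1 x0 y by simp
        then show ?thesis by (simp add: \<delta>_def algebra_simps)
      qed
      have c2: "u x0 \<le> (1/2) * u (x0 + s *\<^sub>R v) + (1/2) * u (x0 - s *\<^sub>R v)"
      proof -
        have e: "(1 - 1/2) *\<^sub>R (x0 + s *\<^sub>R v) + (1/2) *\<^sub>R (x0 - s *\<^sub>R v) = x0"
          by (simp add: vec_eq_iff field_simps)
        have "u ((1 - 1/2) *\<^sub>R (x0 + s *\<^sub>R v) + (1/2) *\<^sub>R (x0 - s *\<^sub>R v))
              \<le> (1 - 1/2) * u (x0 + s *\<^sub>R v) + (1/2) * u (x0 - s *\<^sub>R v)"
          by (rule convex_onD[OF cvx]) (use pm in auto)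
        then show ?thesis unfolding e by simp
      qed
      have c3: "u x0 + s * \<delta> \<le> u (x0 - s *\<^sub>R v)" using c1 c2 by linarith
      have dec: "x0 - s *\<^sub>R v = (\<Sum>i\<in>UNIV. (1 / N) *\<^sub>R (x0 + (s * (- N * v $ i)) *\<^sub>R axis i 1))"
      proof -
        have "(\<Sum>i\<in>UNIV. (1 / N) *\<^sub>R (x0 + (s * (- N * v $ i)) *\<^sub>R axis i 1))
            = (\<Sum>i\<in>(UNIV::'n set). (1 / N) *\<^sub>R x0) - s *\<^sub>R (\<Sum>i\<in>UNIV. v $ i *\<^sub>R axis i 1)"
          using Npos by (simp add: scaleR_add_right sum.distrib scaleR_sum_right sum_subtractf algebra_simps)
        also have "(\<Sum>i\<in>UNIV. v $ i *\<^sub>R axis i 1) = v"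
          using basis_expansion[of v] by (simp add: scalar_mult_eq_scaleR)
        also have "(\<Sum>i\<in>(UNIV::'n set). (1 / N) *\<^sub>R x0) = x0" using Npos by (simp only: sum_constant_scaleR scaleR_scaleR) (simp add: N_def)
        finally show ?thesis by simp
      qed
      have "u (x0 - s *\<^sub>R v) \<le> (\<Sum>i\<in>UNIV. (1 / N) * u (x0 + (s * (- N * v $ i)) *\<^sub>R axis i 1))"
        unfolding dec
        by (rule convex_on_sum[OF _ _ cvx]) (use Npos y_i in \<open>auto simp: N_def\<close>)
      also have "\<dots> = (1 / N) * (\<Sum>i\<in>UNIV. u (x0 + (s * (- N * v $ i)) *\<^sub>R axis i 1))"
        by (simp add: sum_distrib_left)
      finally have "u x0 + s * \<delta> \<le> (1 / N) * (\<Sum>i\<in>UNIV. u (x0 + (s * (- N * v $ i)) *\<^sub>R axis i 1))"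
        using c3 by linarith
      then have "N * (u x0 + s * \<delta>) \<le> (\<Sum>i\<in>UNIV. u (x0 + (s * (- N * v $ i)) *\<^sub>R axis i 1))"
        using Npos by (simp add: field_simps)
      then have "N * s * \<delta> \<le> (\<Sum>i\<in>UNIV. u (x0 + (s * (- N * v $ i)) *\<^sub>R axis i 1) - u x0)"
        by (simp add: sum_subtractf N_def algebra_simps)
      then have "N * \<delta> \<le> (\<Sum>i\<in>UNIV. u (x0 + (s * (- N * v $ i)) *\<^sub>R axis i 1) - u x0) / s"
        using elim by (simp add: pos_le_divide_eq mult.commute mult.left_commute)
      then show ?case using elim by (simp add: q_def sum_divide_distrib)
    qed
  qed
  have "N * \<delta> \<le> 0" by (rule tendsto_le[OF trivial_limit_at_right_real lim tendsto_const ev])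
  then show False using Npos dpos by (metis mult_pos_pos not_le)
qed



lemma xlnx_cont: "continuous_on {0..} (\<lambda>t::real. t * ln t)"
  unfolding continuous_on_eq_continuous_within
proof 
  fix t :: real assume t0: "t \<in> {0..}"
  show "continuous (at t within {0..}) (\<lambda>t. t * ln t)"
  proof (cases "t = 0")
    case True
    have "((\<lambda>t::real. t * ln t) \<longlongrightarrow> 0) (at_right 0)" by real_asymp
    then show ?thesis using True by (simp add: continuous_within at_within_Ici_at_right)
  next
    case False
    then have "t > 0" using t0 by simp
    then have "isCont ln t" by (simp add: isCont_ln)
    then show ?thesis by (rule continuous_at_imp_continuous_at_within[OF isCont_mult[OF continuous_ident]])
  qed
qed

lemma delzant_normal:
  assumes "delzant P" "F facet_of P"
  shows "prim_inward_normal P F (facet_normal P F)"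
proof -
  have "interior P \<noteq> {}" "\<exists>nu. prim_inward_normal P F nu" using assms by (auto simp: delzant_def)
  then show ?thesis using facet_normal_prop assms(2) by blast
qed

lemma facet_fun_props:
  assumes "delzant P" "F facet_of P"
  shows "\<forall>x\<in>P. facet_fun P F x \<ge> 0" "\<forall>x\<in>F. facet_fun P F x = 0"
proof -
  obtain c where c: "\<forall>x\<in>F. facet_normal P F \<bullet> x = c" "\<forall>x\<in>P. c \<le> facet_normal P F \<bullet> x"
    using delzant_normal[OF assms] unfolding prim_inward_normal_def by blast
  have "F \<noteq> {}" using assms(2) by (simp add: facet_of_def)
  then have a0: "(SOME a. a \<in> F) \<in> F" by (simp add: some_in_eq)
  show "\<forall>x\<in>P. facet_fun P F x \<ge> 0" "\<forall>x\<in>F. facet_fun P F x = 0"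
    using c a0 by (auto simp: facet_fun_def)
qed

lemma smooth_cont:
  assumes "smooth_on S f" shows "continuous_on S f"
proof -
  obtain U g where U: "S \<subseteq> U" "C_inf_on U g" "\<forall>x\<in>S. g x = f x"
    using assms by (auto simp: smooth_on_def)
  have "continuous_on U (iter_partial [] g)" using U(2) by (simp add: C_inf_on_def)
  then have "continuous_on U g" by (simp add: iter_partial_def)
  then have "continuous_on S g" using U(1) continuous_on_subset by blast
  then show ?thesis by (rule continuous_on_eq) (use U(3) in auto)
qed

lemma u_cont:
  assumes del: "delzant P" and sp: "symplectic_potential P u"
  shows "continuous_on P u"
proof -
  obtain f where f: "smooth_on P f"
    "\<forall>x\<in>P. u x = (1/2) * (\<Sum>F\<in>{F. F facet_of P}. facet_fun P F x * ln (facet_fun P F x)) + f x"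
    using sp unfolding symplectic_potential_def by blast
  have cf: "continuous_on P f" by (rule smooth_cont[OF f(1)])
  have lin: "continuous_on P (facet_fun P F)" for F
    unfolding facet_fun_def by (intro continuous_intros)
  have tc: "continuous_on P (\<lambda>x. facet_fun P F x * ln (facet_fun P F x))" if F: "F facet_of P" for F
  proof -
    have "facet_fun P F ` P \<subseteq> {0..}" using facet_fun_props[OF del F] by auto
    then show ?thesis
      using continuous_on_compose2[OF xlnx_cont lin] by blast
  qed
  then have "continuous_on P (\<lambda>x. (1/2) * (\<Sum>F\<in>{F. F facet_of P}. facet_fun P F x * ln (facet_fun P F x)) + f x)"
    by (rule continuous_on_add[OF continuous_on_mult[OF continuous_on_const continuous_on_sum] cf])
       (use tc in auto)
  then show ?thesis by (rule continuous_on_eq) (use f(2) in auto)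
qed

lemma strict_imp_convex_on:
  fixes f :: "real^'n::finite \<Rightarrow> real"
  assumes "strictly_convex_on S f" shows "convex_on S f"
proof (rule convex_onI)
  show "convex S" using assms by (simp add: strictly_convex_on_def)
  fix t :: real and x y assume t: "0 < t" "t < 1" and xy: "x \<in> S" "y \<in> S"
  show "f ((1 - t) *\<^sub>R x + t *\<^sub>R y) \<le> (1 - t) * f x + t * f y"
  proof (cases "x = y")
    case True then show ?thesis by (simp add: algebra_simps flip: scaleR_add_left)
  next
    case False
    then have "f ((1 - t) *\<^sub>R x + t *\<^sub>R y) < (1 - t) * f x + t * f y"
      using assms t xy unfolding strictly_convex_on_def by blast
    then show ?thesis by simp
  qed
qed

lemma C_inf_line_deriv:
  assumes "C_inf_on U g" "x \<in> U"
  shows "((\<lambda>t. g (x + t *\<^sub>R axis i 1)) has_real_derivative partial i g x) (at 0)"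
proof -
  have "(\<lambda>t. iter_partial [] g (x + t *\<^sub>R axis i 1)) differentiable (at 0)"
    using assms by (auto simp: C_inf_on_def)
  then have "(\<lambda>t. g (x + t *\<^sub>R axis i 1)) differentiable (at 0)" by (simp add: iter_partial_def)
  then show ?thesis unfolding partial_def by (simp add: DERIV_deriv_iff_real_differentiable)
qed

lemma u_nonneg:
  assumes del: "delzant P" and sp: "symplectic_potential P u" and nz: "normalized_at x0 u"
    and x0: "x0 \<in> interior P" and y: "y \<in> P"
  shows "0 \<le> u y"
proof -
  have Ci: "C_inf_on (interior P) u" and sc: "strictly_convex_on (interior P) u"
    using sp by (auto simp: symplectic_potential_def)
  have cvx: "convex_on (interior P) u" by (rule strict_imp_convex_on[OF sc])
  have d: "((\<lambda>t. u (x0 + t *\<^sub>R axis i 1)) has_real_derivative 0) (at 0)" for i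
    using C_inf_line_deriv[OF Ci x0, of i] nz by (simp add: normalized_at_def)
  have int: "\<forall>z\<in>interior P. 0 \<le> u z"
    using convex_min_partials[OF open_interior cvx x0 d] nz by (simp add: normalized_at_def)
  have pol: "polytope P" "interior P \<noteq> {}" using del by (auto simp: delzant_def)
  have cP: "closed P" using polytope_imp_closed[OF pol(1)] .
  have "convex P" using polytope_imp_convex[OF pol(1)] .
  then have "closure (interior P) = closure P" using convex_closure_interior[OF _ pol(2)] by blast
  then have cl: "closure (interior P) = P" using cP by simp
  show ?thesis
    using continuous_ge_on_closure[of "interior P" u y 0] cl u_cont[OF del sp] y int by simp
qed



lemma not_Ints_01: "0 < (x::real) \<Longrightarrow> x < 1 \<Longrightarrow> x \<notin> \<int>"
  by (auto elim!: Ints_cases)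

lemma Q_facet:
  assumes "standard_position P"
  shows "P \<inter> {x. x $ k = 0} facet_of P"
proof -
  have "P \<inter> {x. x $ k = 0} \<in> range (\<lambda>i. P \<inter> {x. x $ i = 0})" by blast
  then show ?thesis using assms unfolding standard_position_def by blast
qed

lemma axis_prim: "primitive_vec (axis k (1::real))"
proof -
  have "integral_vec (axis k (1::real))" by (simp add: integral_vec_def axis_def)
  moreover have "axis k (1::real) \<noteq> 0" by (simp add: axis_eq_0_iff)
  moreover have "\<not> integral_vec ((1 / of_int m) *\<^sub>R axis k (1::real))" if "m > 1" for m :: int
  proof
    assume "integral_vec ((1 / of_int m) *\<^sub>R axis k (1::real))"
    then have "((1 / of_int m) *\<^sub>R axis k (1::real)) $ k \<in> \<int>" unfolding integral_vec_def by blast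
    then have "1 / real_of_int m \<in> \<int>" by simp
    moreover have "0 < 1 / real_of_int m" "1 / real_of_int m < 1" using that by auto
    ultimately show False using not_Ints_01 by blast
  qed
  ultimately show ?thesis by (simp add: primitive_vec_def)
qed

lemma Q_normal:
  assumes del: "delzant P" and sp: "standard_position P"
  shows "facet_normal P (P \<inter> {x. x $ k = 0}) = axis k 1"
proof -
  let ?Q = "P \<inter> {x. x $ k = 0}"
  have F: "?Q facet_of P" by (rule Q_facet[OF sp])
  have pin: "prim_inward_normal P ?Q (axis k 1)"
    unfolding prim_inward_normal_def
  proof (intro conjI exI[of _ 0])
    show "primitive_vec (axis k (1::real))" by (rule axis_prim)
    show "\<forall>x\<in>?Q. axis k 1 \<bullet> x = 0" by (simp add: inner_axis')
    show "\<forall>x\<in>P. 0 \<le> axis k 1 \<bullet> x" using sp by (auto simp: inner_axis' standard_position_def)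
  qed
  have int: "interior P \<noteq> {}" using del by (simp add: delzant_def)
  show ?thesis by (rule normal_unique[OF int F delzant_normal[OF del F] pin])
qed

lemma Q_basic:
  assumes del: "delzant P" and sp: "standard_position P"
  shows "compact (P \<inter> {x. x $ k = 0})" "convex (P \<inter> {x. x $ k = 0})" "P \<inter> {x. x $ k = 0} \<noteq> {}"
proof -
  have pol: "polytope P" using del by (simp add: delzant_def)
  have cl: "closed {x::real^'a. x $ k = 0}"
    using closed_hyperplane[of "axis k (1::real)" 0] by (simp add: inner_axis')
  show "compact (P \<inter> {x. x $ k = 0})" using polytope_imp_compact[OF pol] cl by (simp add: compact_Int_closed)
  have cv: "convex {x::real^'a. x $ k = 0}"
    using convex_hyperplane[of "axis k (1::real)" 0] by (simp add: inner_axis')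
  show "convex (P \<inter> {x. x $ k = 0})" using polytope_imp_convex[OF pol] cv by (simp add: convex_Int)
  show "P \<inter> {x. x $ k = 0} \<noteq> {}" using Q_facet[OF sp] by (simp add: facet_of_def)
qed

lemma Q_affhull:
  assumes del: "delzant P" and sp: "standard_position P"
  shows "affine hull (P \<inter> {x. x $ k = 0}) = {x. x $ k = 0}"
proof -
  let ?Q = "P \<inter> {x. x $ k = 0}"
  have hyp: "{x::real^'a. x $ k = 0} = {x. axis k 1 \<bullet> x = 0}" by (simp add: inner_axis')
  have aff: "affine {x::real^'a. x $ k = 0}" unfolding hyp by (rule affine_hyperplane)
  have int: "interior P \<noteq> {}" using del by (simp add: delzant_def)
  have "aff_dim (affine hull ?Q) = aff_dim ?Q" by simp
  also have "\<dots> = aff_dim P - 1" using Q_facet[OF sp] by (simp add: facet_of_def)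
  also have "\<dots> = int DIM(real^'a) - 1" using aff_dim_nonempty_interior[OF int] by simp
  also have "\<dots> = aff_dim {x::real^'a. x $ k = 0}"
    unfolding hyp using aff_dim_hyperplane[of "axis k (1::real)" 0] DIM_positive[where 'a="real^'a"]
    by (simp add: axis_eq_0_iff of_nat_diff)
  finally have ad: "aff_dim (affine hull ?Q) = aff_dim {x::real^'a. x $ k = 0}" .
  show ?thesis
  proof (rule affine_dim_equal[OF affine_affine_hull aff _ _ ad])
    show "affine hull ?Q \<noteq> {}" using Q_basic(3)[OF del sp] by simp
    show "affine hull ?Q \<subseteq> {x. x $ k = 0}" by (rule hull_minimal) (use aff in auto)
  qed
qed

lemma Q_frontier:
  assumes del: "delzant P" and sp: "standard_position P"
  shows "P \<inter> {x. x $ k = 0} \<subseteq> frontier P"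
proof -
  let ?Q = "P \<inter> {x. x $ k = 0}"
  have F: "?Q facet_of P" by (rule Q_facet[OF sp])
  have int: "interior P \<noteq> {}" using del by (simp add: delzant_def)
  have "?Q \<noteq> P" using F by (auto simp: facet_of_def)
  then have "?Q \<subseteq> rel_frontier P" using F face_of_subset_rel_frontier by (auto simp: facet_of_def)
  then show ?thesis using rel_frontier_nonempty_interior[OF int] by simp
qed

lemma inner_rel:
  fixes Q :: "(real^'n::finite) set"
  assumes cvx: "convex Q" and bd: "bounded Q" and x: "x \<in> inner_part Q eps" and e: "eps > 0"
    and y: "y \<in> affine hull Q" and dxy: "dist x y < eps"
  shows "y \<in> rel_interior Q"
proof -
  have xQ: "x \<in> Q" and far: "\<forall>z\<in>rel_frontier Q. eps \<le> dist x z" using x by (auto simp: inner_part_def)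
  have xr: "x \<in> rel_interior Q"
  proof (rule ccontr)
    assume "x \<notin> rel_interior Q"
    then have "x \<in> rel_frontier Q" using xQ closure_subset by (auto simp: rel_frontier_def)
    then show False using far e by force
  qed
  show ?thesis
  proof (cases "y = x")
    case True then show ?thesis using xr by simp
  next
    case False
    then have l: "y - x \<noteq> 0" by simp
    have "x + (y - x) \<in> affine hull Q" using y by simp
    then obtain d where d: "0 < d" "x + d *\<^sub>R (y - x) \<in> rel_frontier Q"
      and di: "\<And>e. 0 \<le> e \<Longrightarrow> e < d \<Longrightarrow> x + e *\<^sub>R (y - x) \<in> rel_interior Q"
      using ray_to_rel_frontier[OF bd xr _ l] by blast
    show ?thesis
    proof (cases "d \<le> 1")
      case True
      have "dist x (x + d *\<^sub>R (y - x)) = d * dist x y" using d by (simp add: dist_norm norm_minus_commute)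
      also have "\<dots> \<le> dist x y" using True d(1) by (simp add: mult_left_le_one_le)
      finally show ?thesis using far d(2) dxy by force
    next
      case False
      then show ?thesis using di[of 1] by simp
    qed
  qed
qed



lemma integral_nonneg_any:
  fixes f :: "real^'n::finite \<Rightarrow> real"
  assumes "\<And>x. x \<in> S \<Longrightarrow> 0 \<le> f x"
  shows "0 \<le> integral S f"
proof (cases "f integrable_on S")
  case True then show ?thesis using integral_nonneg assms by blast
next
  case False then show ?thesis by (simp add: not_integrable_integral)
qed

lemma facet_term_nonneg:
  assumes del: "delzant P" and F: "F facet_of P" and pos: "\<And>y. y \<in> P \<Longrightarrow> 0 \<le> u y"
  shows "0 \<le> facet_lebesgue_integral F (facet_normal P F) u / norm (facet_normal P F)"
proof -
  define nu where "nu = facet_normal P F"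
  obtain c where c: "\<forall>x\<in>F. nu \<bullet> x = c" and pv: "primitive_vec nu"
    using delzant_normal[OF del F] unfolding prim_inward_normal_def nu_def by blast
  have nu0: "nu \<noteq> 0" using pv by (simp add: primitive_vec_def)
  define e where "e = (1 / norm nu) *\<^sub>R nu"
  have ee: "e \<bullet> e = 1" using nu0 by (simp add: e_def power2_norm_eq_inner[symmetric] power2_eq_square)
  define a0 where "a0 = (SOME a. a \<in> F)"
  have "F \<noteq> {}" using F by (simp add: facet_of_def)
  then have a0: "a0 \<in> F" by (simp add: a0_def some_in_eq)
  have FP: "F \<subseteq> P" using F face_of_imp_subset by (auto simp: facet_of_def)
  have "0 \<le> u (y - ((y - a0) \<bullet> e) *\<^sub>R e)" if y: "y \<in> {a + t *\<^sub>R e | a t. a \<in> F \<and> 0 \<le> t \<and> t \<le> 1}" for y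
  proof -
    obtain a t where y': "y = a + t *\<^sub>R e" "a \<in> F" using y by blast
    have "nu \<bullet> (a - a0) = 0" using c a0 y'(2) by (simp add: inner_diff_right)
    then have "(a - a0) \<bullet> e = 0" by (simp add: e_def inner_commute)
    then have "(y - a0) \<bullet> e = t" using ee by (simp add: y'(1) inner_add_left inner_diff_left algebra_simps)
    then have "y - ((y - a0) \<bullet> e) *\<^sub>R e = a" using y'(1) by simp
    then show ?thesis using pos FP y'(2) by auto
  qed
  then have "0 \<le> facet_lebesgue_integral F nu u"
    unfolding facet_lebesgue_integral_def Let_def e_def[symmetric] a0_def[symmetric]
    by (rule integral_nonneg_any)
  then show ?thesis unfolding nu_def by simp
qed

lemma finite_facets:
  assumes "polytope P" shows "finite {F. F facet_of P}"
proof -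
  have "{F. F facet_of P} \<subseteq> {F. F face_of P}" by (auto simp: facet_of_def)
  then show ?thesis using finite_polytope_faces[OF assms] finite_subset by blast
qed

lemma BI_ge:
  assumes del: "delzant P" and sp: "standard_position P" and pos: "\<And>y. y \<in> P \<Longrightarrow> 0 \<le> u y"
  shows "facet_lebesgue_integral (P \<inter> {x. x $ k = 0}) (axis k 1) u \<le> boundary_integral P u"
proof -
  let ?Q = "P \<inter> {x. x $ k = 0}"
  let ?g = "\<lambda>F. facet_lebesgue_integral F (facet_normal P F) u / norm (facet_normal P F)"
  have "?g ?Q \<le> sum ?g {F. F facet_of P}"
    by (rule member_le_sum) (use Q_facet[OF sp] facet_term_nonneg[OF del _ pos] finite_facets del in \<open>auto simp: delzant_def\<close>)
  then show ?thesis unfolding boundary_integral_def using Q_normal[OF del sp] by simp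
qed



lemma compact_integrable:
  fixes h :: "real^'n::finite \<Rightarrow> real"
  assumes S: "compact S" and h: "continuous_on S h"
  shows "h integrable_on S"
proof -
  have "bounded (h ` S)" using compact_continuous_image[OF h S] compact_imp_bounded by blast
  then obtain M where M: "\<forall>y\<in>h ` S. norm y \<le> M" by (auto simp: bounded_iff)
  have L: "S \<in> lmeasurable" using lmeasurable_compact[OF S] .
  show ?thesis
  proof (rule measurable_bounded_by_integrable_imp_integrable)
    show "h \<in> borel_measurable (lebesgue_on S)"
      using continuous_imp_measurable_on_sets_lebesgue[OF h] L fmeasurableD by blast
    show "(\<lambda>x. M) integrable_on S" using integrable_on_const[OF L] .
    show "norm (h x) \<le> M" if "x \<in> S" for x using M that by blast
    show "S \<in> sets lebesgue" using L fmeasurableD by blast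
  qed
qed

lemma Q_point_bound:
  fixes P :: "(real^'n::finite) set" and u :: "real^'n \<Rightarrow> real"
  assumes del: "delzant P" and sp: "standard_position P" and sym: "symplectic_potential P u"
    and pos: "\<And>y. y \<in> P \<Longrightarrow> 0 \<le> u y"
    and e: "eps > 0" and x: "x \<in> inner_part (P \<inter> {x. x $ k = 0}) eps"
  shows "u x * (\<Prod>j\<in>UNIV. if j = k then 1 else eps / real CARD('n)) \<le> boundary_integral P u"
proof -
  define Q where "Q = P \<inter> {x. x $ k = 0}"
  define N where "N = real CARD('n)"
  have Npos: "N > 0" by (simp add: N_def)
  define \<delta> where "\<delta> = eps / (2 * N)"
  have dpos: "\<delta> > 0" using e Npos by (simp add: \<delta>_def)
  define lo where "lo = (\<chi> j. if j = k then 0 else x $ j - \<delta>)"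
  define hi where "hi = (\<chi> j. if j = k then 1 else x $ j + \<delta>)"
  define B where "B = cbox lo hi"
  define pr where "pr y = y - (y $ k) *\<^sub>R axis k 1" for y :: "real^'n"
  have pr_nth: "pr y $ j = (if j = k then 0 else y $ j)" for y j by (simp add: pr_def axis_def)
  define h where "h y = u (pr y)" for y
  define SQ where "SQ = {a + t *\<^sub>R axis k 1 | a t. a \<in> Q \<and> 0 \<le> t \<and> t \<le> 1}"
  have xQ: "x \<in> Q" using x by (simp add: inner_part_def Q_def)
  then have xk: "x $ k = 0" by (simp add: Q_def)
  have cQ: "compact Q" "convex Q" using Q_basic[OF del sp] by (simp_all add: Q_def)
  have ahQ: "affine hull Q = {x. x $ k = 0}" using Q_affhull[OF del sp] by (simp add: Q_def)
  have rel: "z \<in> rel_interior Q" if "z $ k = 0" "dist x z < eps" for z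
    using inner_rel[OF cQ(2) compact_imp_bounded[OF cQ(1)] x[folded Q_def] e] ahQ that by simp
  have QP: "Q \<subseteq> P" by (simp add: Q_def)
  have FI: "facet_lebesgue_integral Q (axis k 1) u = integral SQ h"
  proof -
    define a0 where "a0 = (SOME a. a \<in> Q)"
    have "Q \<noteq> {}" using Q_basic(3)[OF del sp] by (simp add: Q_def)
    then have "a0 \<in> Q" by (simp add: a0_def some_in_eq)
    then have a0k: "a0 $ k = 0" by (simp add: Q_def)
    have "(\<lambda>y. u (y - ((y - a0) \<bullet> axis k 1) *\<^sub>R axis k 1)) = h"
      by (rule ext) (simp add: h_def pr_def inner_axis a0k)
    then show ?thesis unfolding facet_lebesgue_integral_def Let_def SQ_def a0_def[symmetric] by simp
  qed
  have SQ_img: "SQ = (\<lambda>p. fst p + snd p *\<^sub>R axis k 1) ` (Q \<times> {0..1})"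
  proof
    show "SQ \<subseteq> (\<lambda>p. fst p + snd p *\<^sub>R axis k 1) ` (Q \<times> {0..1})"
    proof
      fix y assume "y \<in> SQ"
      then obtain a t where "y = a + t *\<^sub>R axis k 1" "a \<in> Q" "0 \<le> t" "t \<le> 1" unfolding SQ_def by blast
      then show "y \<in> (\<lambda>p. fst p + snd p *\<^sub>R axis k 1) ` (Q \<times> {0..1})"
        by (intro image_eqI[of _ _ "(a, t)"]) auto
    qed
    show "(\<lambda>p. fst p + snd p *\<^sub>R axis k 1) ` (Q \<times> {0..1}) \<subseteq> SQ" unfolding SQ_def by force
  qed
  have cSQ: "compact SQ" unfolding SQ_img
    by (intro compact_continuous_image compact_Times cQ(1) compact_Icc continuous_intros)
  have prSQ: "pr y \<in> Q" if "y \<in> SQ" for y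
  proof -
    obtain a t where y: "y = a + t *\<^sub>R axis k 1" "a \<in> Q" using \<open>y \<in> SQ\<close> SQ_def by blast
    have "a $ k = 0" using y(2) by (simp add: Q_def)
    then have "pr y = a" by (simp add: y(1) vec_eq_iff pr_nth axis_def)
    then show ?thesis using y(2) by simp
  qed
  have cpr: "continuous_on S pr" for S unfolding pr_def by (intro continuous_intros)
  have ch: "continuous_on SQ h"
    unfolding h_def by (rule continuous_on_compose2[OF u_cont[OF del sym] cpr]) (use prSQ QP in auto)
  have hpos: "0 \<le> h y" if "y \<in> SQ" for y using pos prSQ QP that by (auto simp: h_def)
  have iSQ: "h integrable_on SQ" by (rule compact_integrable[OF cSQ ch])
  have prB: "pr y \<in> rel_interior Q" if "y \<in> B" for y
  proof -
    have yb: "\<forall>j. lo $ j \<le> y $ j \<and> y $ j \<le> hi $ j" using that by (simp add: B_def mem_box_cart)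
    have cj: "\<bar>(x - pr y) $ j\<bar> \<le> \<delta>" for j
      using yb[rule_format, of j] dpos by (auto simp: lo_def hi_def pr_nth xk)
    have "dist x (pr y) \<le> (\<Sum>j\<in>UNIV. \<bar>(x - pr y) $ j\<bar>)" unfolding dist_norm by (rule norm_le_l1_cart)
    also have "\<dots> \<le> (\<Sum>j\<in>(UNIV::'n set). \<delta>)" by (rule sum_mono) (rule cj)
    also have "\<dots> = eps / 2" using Npos by (simp add: \<delta>_def N_def)
    finally have "dist x (pr y) < eps" using e by simp
    then show ?thesis using rel[of "pr y"] by (simp add: pr_nth)
  qed
  have BSQ: "B \<subseteq> SQ"
  proof
    fix y assume y: "y \<in> B"
    have yb: "\<forall>j. lo $ j \<le> y $ j \<and> y $ j \<le> hi $ j" using y by (simp add: B_def mem_box_cart)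
    have "0 \<le> y $ k" "y $ k \<le> 1" using yb[rule_format, of k] by (simp_all add: lo_def hi_def)
    moreover have "y = pr y + (y $ k) *\<^sub>R axis k 1" by (simp add: pr_def)
    moreover have "pr y \<in> Q" using prB[OF y] rel_interior_subset by blast
    ultimately show "y \<in> SQ" unfolding SQ_def by blast
  qed
  have iB: "h integrable_on B" unfolding B_def
    by (rule integrable_continuous) (use continuous_on_subset[OF ch BSQ] in \<open>simp add: B_def\<close>)
  have le1: "integral B h \<le> integral SQ h"
    by (rule integral_subset_le[OF BSQ iB iSQ]) (use hpos in auto)
  define c2 where "c2 = lo + hi"
  have refl_mem: "c2 - y \<in> B" if "y \<in> B" for y
  proof -
    have "\<forall>j. lo $ j \<le> y $ j \<and> y $ j \<le> hi $ j" using that by (simp add: B_def mem_box_cart)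
    then show ?thesis by (auto simp: B_def mem_box_cart c2_def)
  qed
  have img: "(\<lambda>y. (1 / (-1::real)) *\<^sub>R y + - ((1 / (-1::real)) *\<^sub>R c2)) ` B = B"
  proof -
    have "(\<lambda>y. (1 / (-1::real)) *\<^sub>R y + - ((1 / (-1::real)) *\<^sub>R c2)) = (\<lambda>y. c2 - y)" by (rule ext) simp
    moreover have "(\<lambda>y. c2 - y) ` B = B"
    proof
      show "(\<lambda>y. c2 - y) ` B \<subseteq> B" using refl_mem by blast
      show "B \<subseteq> (\<lambda>y. c2 - y) ` B"
      proof
        fix y assume "y \<in> B"
        then have "c2 - y \<in> B" by (rule refl_mem)
        moreover have "y = c2 - (c2 - y)" by simp
        ultimately show "y \<in> (\<lambda>y. c2 - y) ` B" by blast
      qed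
    qed
    ultimately show ?thesis by simp
  qed
  have hI: "(h has_integral integral B h) B" using integrable_integral[OF iB] .
  have hR: "((\<lambda>y. h ((-1::real) *\<^sub>R y + c2)) has_integral integral B h) B"
    using has_integral_affinity[OF hI[unfolded B_def], of "-1" c2] img by (simp add: B_def)
  have sumI: "((\<lambda>y. h y + h ((-1::real) *\<^sub>R y + c2)) has_integral 2 * integral B h) B"
    using has_integral_add[OF hI hR] by simp
  have cvxQ: "convex_on (rel_interior Q) u"
  proof -
    have "Q face_of P" "Q \<noteq> {}" "Q \<subseteq> frontier P"
      using Q_facet[OF sp] Q_frontier[OF del sp] by (auto simp: Q_def facet_of_def)
    then have "strictly_convex_on (rel_interior Q) u" using sym by (auto simp: symplectic_potential_def)
    then show ?thesis by (rule strict_imp_convex_on)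
  qed
  have mid: "2 * u x \<le> h y + h ((-1::real) *\<^sub>R y + c2)" if y: "y \<in> B" for y
  proof -
    have pr2: "pr ((-1::real) *\<^sub>R y + c2) = 2 *\<^sub>R x - pr y"
      by (simp add: vec_eq_iff pr_nth c2_def lo_def hi_def xk)
    have z1: "pr y \<in> rel_interior Q" by (rule prB[OF y])
    have pr3: "pr (c2 - y) = 2 *\<^sub>R x - pr y" using pr2 by simp
    then have z2: "2 *\<^sub>R x - pr y \<in> rel_interior Q" using prB[OF refl_mem[OF y]] by simp
    have "u ((1 - 1/2) *\<^sub>R pr y + (1/2) *\<^sub>R (2 *\<^sub>R x - pr y)) \<le> (1 - 1/2) * u (pr y) + (1/2) * u (2 *\<^sub>R x - pr y)"
      by (rule convex_onD[OF cvxQ]) (use z1 z2 in auto)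
    moreover have "(1 - 1/2) *\<^sub>R pr y + (1/2) *\<^sub>R (2 *\<^sub>R x - pr y) = x" by (simp add: vec_eq_iff field_simps)
    ultimately show ?thesis by (simp add: h_def pr3)
  qed
  have "integral B (\<lambda>y. 2 * u x) \<le> integral B (\<lambda>y. h y + h ((-1::real) *\<^sub>R y + c2))"
    by (rule integral_le) (use sumI mid in \<open>auto simp: B_def\<close>)
  then have "Henstock_Kurzweil_Integration.content B * (2 * u x) \<le> 2 * integral B h"
    using sumI by (simp add: B_def integral_unique)
  then have le2: "Henstock_Kurzweil_Integration.content B * u x \<le> integral B h" by simp
  have cB: "Henstock_Kurzweil_Integration.content B = (\<Prod>j\<in>UNIV. if j = k then 1 else eps / real CARD('n))"
  proof -
    have "x \<in> B" using dpos by (simp add: B_def mem_box_cart lo_def hi_def xk)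
    then have "B \<noteq> {}" by blast
    then have "Henstock_Kurzweil_Integration.content B = (\<Prod>j\<in>UNIV. hi $ j - lo $ j)" by (simp add: B_def content_cbox_cart)
    also have "\<dots> = (\<Prod>j\<in>UNIV. if j = k then 1 else eps / real CARD('n))"
      by (rule prod.cong) (auto simp: hi_def lo_def \<delta>_def N_def)
    finally show ?thesis .
  qed
  have "u x * Henstock_Kurzweil_Integration.content B \<le> facet_lebesgue_integral Q (axis k 1) u" using le1 le2 FI by (simp add: mult.commute)
  also have "\<dots> \<le> boundary_integral P u" unfolding Q_def by (rule BI_ge[OF del sp pos])
  finally show ?thesis using cB by simp
qed



lemma deriv_bound:
  fixes P :: "(real^'n::finite) set" and u :: "real^'n \<Rightarrow> real"
  assumes del: "delzant P" and sp: "standard_position P" and sym: "symplectic_potential P u"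
    and pos: "\<And>y. y \<in> P \<Longrightarrow> 0 \<le> u y"
    and e: "eps > 0" and x: "x \<in> inner_part (P \<inter> {x. x $ k = 0}) eps" and ik: "i \<noteq> k"
    and M: "\<And>z. z \<in> inner_part (P \<inter> {x. x $ k = 0}) (eps / 2) \<Longrightarrow> u z < M"
  shows "\<bar>partial i u x\<bar> < M / (eps / 2)"
proof -
  define Q where "Q = P \<inter> {x. x $ k = 0}"
  define r where "r = eps / 2"
  have r: "r > 0" "r < eps" using e by (auto simp: r_def)
  define \<phi> where "\<phi> t = u (x + t *\<^sub>R axis i 1)" for t
  have xQ: "x \<in> Q" and far: "\<forall>w\<in>rel_frontier Q. eps \<le> dist x w" using x by (auto simp: inner_part_def Q_def)
  then have xk: "x $ k = 0" by (simp add: Q_def)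
  have cQ: "compact Q" "convex Q" using Q_basic[OF del sp] by (simp_all add: Q_def)
  have ahQ: "affine hull Q = {x. x $ k = 0}" using Q_affhull[OF del sp] by (simp add: Q_def)
  have zk: "(x + t *\<^sub>R axis i 1) $ k = 0" for t using ik xk by (simp add: axis_def)
  have dz: "dist x (x + t *\<^sub>R axis i 1) = \<bar>t\<bar>" for t by (simp add: dist_norm)
  have zrel: "x + t *\<^sub>R axis i 1 \<in> rel_interior Q" if "\<bar>t\<bar> < eps" for t
    using inner_rel[OF cQ(2) compact_imp_bounded[OF cQ(1)] x[folded Q_def] e] ahQ zk dz that by simp
  have zin: "x + t *\<^sub>R axis i 1 \<in> inner_part Q (eps / 2)" if "\<bar>t\<bar> = r" for t
  proof -
    have "x + t *\<^sub>R axis i 1 \<in> Q" using zrel[of t] that r rel_interior_subset by auto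
    moreover have "eps / 2 \<le> dist (x + t *\<^sub>R axis i 1) w" if w: "w \<in> rel_frontier Q" for w
    proof -
      have "eps \<le> dist x w" using far w by blast
      also have "\<dots> \<le> dist x (x + t *\<^sub>R axis i 1) + dist (x + t *\<^sub>R axis i 1) w" by (rule dist_triangle)
      finally show ?thesis using dz[of t] \<open>\<bar>t\<bar> = r\<close> by (simp add: r_def)
    qed
    ultimately show ?thesis by (simp add: inner_part_def)
  qed
  have phir: "\<phi> r < M" "\<phi> (-r) < M" using M zin[of r] zin[of "-r"] r by (auto simp: \<phi>_def Q_def)
  have phi0: "0 \<le> \<phi> 0" using pos xQ by (simp add: \<phi>_def Q_def)
  have face: "Q face_of P" "Q \<noteq> {}" "Q \<subseteq> frontier P"
    using Q_facet[OF sp] Q_frontier[OF del sp] by (auto simp: Q_def facet_of_def)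
  then have sm: "smooth_on (rel_interior Q) u" and sc: "strictly_convex_on (rel_interior Q) u"
    using sym by (auto simp: symplectic_potential_def)
  have cvxQ: "convex_on (rel_interior Q) u" by (rule strict_imp_convex_on[OF sc])
  have cvx: "convex_on {-r..r} \<phi>"
  proof (rule convex_onI)
    show "convex {-r..r}" by simp
    fix s t1 t2 :: real assume s: "0 < s" "s < 1" and t: "t1 \<in> {-r..r}" "t2 \<in> {-r..r}"
    have m: "x + ((1 - s) * t1 + s * t2) *\<^sub>R axis i 1 = (1 - s) *\<^sub>R (x + t1 *\<^sub>R axis i 1) + s *\<^sub>R (x + t2 *\<^sub>R axis i 1)"
      by (simp add: algebra_simps flip: scaleR_add_left)
    have "u ((1 - s) *\<^sub>R (x + t1 *\<^sub>R axis i 1) + s *\<^sub>R (x + t2 *\<^sub>R axis i 1))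
        \<le> (1 - s) * u (x + t1 *\<^sub>R axis i 1) + s * u (x + t2 *\<^sub>R axis i 1)"
      by (rule convex_onD[OF cvxQ]) (use s t r zrel in auto)
    then show "\<phi> ((1 - s) *\<^sub>R t1 + s *\<^sub>R t2) \<le> (1 - s) * \<phi> t1 + s * \<phi> t2"
      by (simp add: \<phi>_def m)
  qed
  obtain U g where U: "rel_interior Q \<subseteq> U" "C_inf_on U g" "\<forall>z\<in>rel_interior Q. g z = u z"
    using sm by (auto simp: smooth_on_def)
  have xU: "x \<in> U" using zrel[of 0] e U(1) by auto
  have dg: "((\<lambda>t. g (x + t *\<^sub>R axis i 1)) has_real_derivative partial i g x) (at 0)"
    by (rule C_inf_line_deriv[OF U(2) xU])
  have dphi: "(\<phi> has_real_derivative partial i g x) (at 0)"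
  proof (rule has_field_derivative_transform_within_open[OF dg, of "{-eps<..<eps}"])
    show "open {-eps<..<eps}" by simp
    show "0 \<in> {-eps<..<eps}" using e by simp
    fix t assume "t \<in> {-eps<..<eps}"
    then have "\<bar>t\<bar> < eps" by auto
    then show "g (x + t *\<^sub>R axis i 1) = \<phi> t" using zrel U(3) by (simp add: \<phi>_def)
  qed
  have pd: "partial i u x = partial i g x"
  proof -
    have "partial i u x = deriv \<phi> 0" by (simp add: partial_def \<phi>_def[abs_def])
    then show ?thesis using DERIV_imp_deriv[OF dphi] by simp
  qed
  define D where "D = partial i g x"
  have dw: "(\<phi> has_field_derivative D) (at 0 within {-r..r})"
    using has_field_derivative_at_within[OF dphi] by (simp add: D_def)
  have c0: "0 \<in> interior {-r..r}" using r by simp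
  have t1: "D * (r - 0) \<le> \<phi> r - \<phi> 0"
    by (rule convex_on_imp_above_tangent[OF cvx connected_Icc c0 _ dw]) (use r in simp)
  have t2: "D * (-r - 0) \<le> \<phi> (-r) - \<phi> 0"
    by (rule convex_on_imp_above_tangent[OF cvx connected_Icc c0 _ dw]) (use r in simp)
  have "D * r < M" using t1 phir phi0 by simp
  moreover have "- D * r < M" using t2 phir phi0 by simp
  ultimately have "\<bar>D\<bar> * r < M" by (simp add: abs_if)
  then have "\<bar>D\<bar> < M / r" using r by (simp add: pos_less_divide_eq)
  then show ?thesis using pd by (simp add: D_def r_def)
qed



theorem lemma3p9:
  fixes P :: "(real^'n::finite) set" and x0 :: "real^'n" and k :: 'n and eps C1 :: real
  assumes "delzant P" and "standard_position P" and "x0 \<in> interior P" and "eps > 0"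
  shows "\<exists>C. \<forall>u. symplectic_potential P u \<and> normalized_at x0 u \<and>
            (\<forall>x\<in>interior P. Rm_sq u x \<le> 1) \<and> boundary_integral P u < C1 \<longrightarrow>
            (\<forall>x\<in>inner_part (P \<inter> {x. x $ k = 0}) eps.
               u x < C \<and> (\<forall>i. i \<noteq> k \<longrightarrow> \<bar>partial i u x\<bar> < C))"
proof -
  note del = assms(1) and sp = assms(2) and x0 = assms(3) and e = assms(4)
  define V where "V d = (\<Prod>j\<in>(UNIV::'n set). if j = k then 1 else d / real CARD('n))" for d :: real
  have Vpos: "V d > 0" if "d > 0" for d
    unfolding V_def by (rule prod_pos) (use that in auto)
  have e2: "eps / 2 > 0" using e by simp
  define C where "C = max (C1 / V eps) ((C1 / V (eps / 2)) / (eps / 2))"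
  have ubound: "u x < C1 / V d"
    if sym: "symplectic_potential P u" and pos: "\<And>y. y \<in> P \<Longrightarrow> 0 \<le> u y"
      and bi: "boundary_integral P u < C1" and d: "d > 0"
      and x: "x \<in> inner_part (P \<inter> {x. x $ k = 0}) d" for u x d
  proof -
    have "u x * V d \<le> boundary_integral P u"
      using Q_point_bound[OF del sp sym pos d x] by (simp add: V_def)
    then have "u x * V d < C1" using bi by simp
    then show ?thesis using Vpos[OF d] by (simp add: pos_less_divide_eq)
  qed
  show ?thesis
  proof (intro exI[of _ C] allI impI ballI conjI)
    fix u x
    assume H: "symplectic_potential P u \<and> normalized_at x0 u \<and>
            (\<forall>x\<in>interior P. Rm_sq u x \<le> 1) \<and> boundary_integral P u < C1"
      and x: "x \<in> inner_part (P \<inter> {x. x $ k = 0}) eps"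
    have sym: "symplectic_potential P u" and nz: "normalized_at x0 u" and bi: "boundary_integral P u < C1"
      using H by auto
    have pos: "\<And>y. y \<in> P \<Longrightarrow> 0 \<le> u y" using u_nonneg[OF del sym nz x0] by blast
    show "u x < C" using ubound[OF sym pos bi e x] by (simp add: C_def)
    fix i assume ik: "i \<noteq> k"
    have "\<bar>partial i u x\<bar> < (C1 / V (eps / 2)) / (eps / 2)"
      by (rule deriv_bound[OF del sp sym pos e x ik ubound[OF sym pos bi e2]])
    then show "\<bar>partial i u x\<bar> < C" by (simp add: C_def)
  qed
qed

end
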